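(* Let $\psi:\mathbb{N}^*\to\mathbb{N}^*\sqcup\mathcal{A}$ be a function such that for every $n\ge1$ either $\psi(n)\in\mathcal{A}$ or $1\le\psi(n)\le n-1$, and let $(\pi_i)_{i\ge1}$ and $w_\psi$ be the associated palindromes and infinite word. Then the following are equivalent: (a) $\psi$ is reduced; (b) the palindromic prefixes of $w_\psi$ are exactly the words $\pi_i$, $i\ge1$.
   Context: $\mathcal{A}$ is an alphabet (finite or infinite) disjoint from $\mathbb{N}^*=\{1,2,\dots\}$; the empty word $\varepsilon$ is a palindrome. Associated words: $\pi_1=\varepsilon$ and, for $i\ge1$: if $\psi(i)\in\mathcal{A}$, $\pi_{i+1}=\pi_i\,\psi(i)\,\pi_i$; if $\psi(i)\in\mathbb{N}^*$, then $\pi_{\psi(i)}$ is a prefix of $\pi_i$, and writing $\pi_i=\pi_{\psi(i)}b_i$, $\pi_{i+1}=\pi_ib_i$. Each $\pi_i$ is a palindrome and a proper prefix of $\pi_{i+1}$; $w_\psi$ is the infinite word having all $\pi_i$ as prefixes. Let $(t_k)_{k\ge0}$ be the (finite or infinite) family, in increasing order, of all $n\ge1$ such that either $\psi(n)\in\mathcal{A}$ or $1\le\psi(n)\le n-2$ (so $t_0=1$). $\psi$ is reduced if for every $k\ge1$ such that $t_k$ exists: $\psi(t_k)\ne\psi(t_{k-1})$, and either $\psi(t_k)\in\mathcal{A}$ or $\psi(t_k)<t_{k-1}$. *)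

theory Defs
  imports Main
begin

text \<open>The directive sequence psi maps positive integers to letters (Inl a, a in the
alphabet 'a) or to positive integers (Inr m).\<close>

text \<open>pal psi i is the associated palindrome pi_i (meaningful for i >= 1; pal psi 0 = []).
  pi_1 = empty; pi_(i+1) = pi_i a pi_i if psi(i) = a is a letter;
  pi_(i+1) = pi_i b_i where pi_i = pi_(psi i) b_i if psi(i) is an integer.\<close>
function pal :: "(nat \<Rightarrow> 'a + nat) \<Rightarrow> nat \<Rightarrow> 'a list" where
  "pal psi n = (if n \<le> 1 then [] else
     (case psi (n - 1) of
        Inl a \<Rightarrow> pal psi (n - 1) @ a # pal psi (n - 1)
      | Inr m \<Rightarrow> (if m < n then pal psi (n - 1) @ drop (length (pal psi m)) (pal psi (n - 1))
                  else undefined)))"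
  by pat_completeness auto
termination by (relation "measure (\<lambda>(psi, n). n)") auto

declare pal.simps [simp del]

definition wpsi :: "(nat \<Rightarrow> 'a + nat) \<Rightarrow> nat \<Rightarrow> 'a" where
  "wpsi psi k = pal psi (LEAST n. k < length (pal psi n)) ! k"

definition admissible :: "(nat \<Rightarrow> 'a + nat) \<Rightarrow> bool" where
  "admissible psi \<longleftrightarrow> (\<forall>n\<ge>1. (\<exists>a. psi n = Inl a) \<or> (\<exists>m. psi n = Inr m \<and> 1 \<le> m \<and> m \<le> n - 1))"

definition tset :: "(nat \<Rightarrow> 'a + nat) \<Rightarrow> nat set" where
  "tset psi = {n. n \<ge> 1 \<and> ((\<exists>a. psi n = Inl a) \<or> (\<exists>m. psi n = Inr m \<and> 1 \<le> m \<and> m \<le> n - 2))}"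

text \<open>Reduced: for each consecutive pair t_(k-1) < t_k of the increasing enumeration of tset,
  psi(t_k) differs from psi(t_(k-1)) and psi(t_k) is a letter or psi(t_k) < t_(k-1).\<close>
definition reduced :: "(nat \<Rightarrow> 'a + nat) \<Rightarrow> bool" where
  "reduced psi \<longleftrightarrow>
     (\<forall>p n. p \<in> tset psi \<and> n \<in> tset psi \<and> p < n \<and> (\<forall>j. p < j \<and> j < n \<longrightarrow> j \<notin> tset psi) \<longrightarrow>
        psi n \<noteq> psi p \<and> ((\<exists>a. psi n = Inl a) \<or> (\<exists>m. psi n = Inr m \<and> m < p)))"

definition is_prefix_of_inf :: "'a list \<Rightarrow> (nat \<Rightarrow> 'a) \<Rightarrow> bool" where
  "is_prefix_of_inf u w \<longleftrightarrow> u = map w [0..<length u]"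

end

theory Submission
  imports Defs
begin


definition per :: "'b list \<Rightarrow> nat \<Rightarrow> bool" where
  "per w e \<longleftrightarrow> (\<forall>k. k + e < length w \<longrightarrow> w!k = w!(k+e))"

lemma per_take: "per w e \<Longrightarrow> per (take n w) e"
  unfolding per_def by auto

lemma per_mod: assumes "per w e" "0 < e" "x < length w" shows "w ! x = w ! (x mod e)"
  using assms(3)
proof (induction x rule: less_induct)
  case (less x)
  show ?case
  proof (cases "x < e")
    case True then show ?thesis by simp
  next
    case False
    then have "x - e < x" "x - e < length w" using assms(2) less.prems by auto
    then have "w ! (x - e) = w ! ((x - e) mod e)" using less.IH by blast
    moreover have "w ! (x - e) = w ! (x - e + e)" using assms(1) False less.prems unfolding per_def
      by simp
    moreover have "x - e + e = x" using False by simp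
    moreover have "(x - e) mod e = x mod e" using False by (simp add: mod_if)
    ultimately show ?thesis by simp
  qed
qed

lemma per_cong: assumes "per w e" "x < length w" "y < length w" "x mod e = y mod e"
  shows "w ! x = w ! y"
proof (cases "e = 0")
  case True then show ?thesis using assms by simp
next
  case False then show ?thesis using per_mod[OF assms(1) _ assms(2)] per_mod[OF assms(1) _ assms(3)] assms(4) by simp
qed

lemma per_diff: assumes "per w p" "per w q" "p < q" "p + q \<le> length w" shows "per w (q - p)"
  unfolding per_def
proof (intro allI impI)
  fix k assume k: "k + (q - p) < length w"
  show "w ! k = w ! (k + (q - p))"
  proof (cases "k + q < length w")
    case True
    have "w ! k = w ! (k + q)" using assms(2) True unfolding per_def by blast
    moreover have "w ! (k + (q - p)) = w ! (k + (q - p) + p)" using assms(1) True assms(3) unfolding per_def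
      by simp
    ultimately show ?thesis using assms(3) by simp
  next
    case False
    then have kp: "p \<le> k" using assms(4) by linarith
    have "w ! (k - p) = w ! (k - p + p)" using assms(1) k kp assms(3) unfolding per_def by simp
    moreover have "w ! (k - p) = w ! (k - p + q)" using assms(2) k kp assms(3) unfolding per_def by simp
    ultimately show ?thesis using kp assms(3) by (simp add: algebra_simps)
  qed
qed

lemma fw: "per w p \<Longrightarrow> per w q \<Longrightarrow> p + q \<le> length w \<Longrightarrow> per w (gcd p q)"
proof (induction "p+q" arbitrary: p q rule: less_induct)
  case less
  show ?case
  proof (cases "p = 0 \<or> q = 0 \<or> p = q")
    case True then show ?thesis using less.prems by auto
  next
    case False
    show ?thesis
    proof (cases "p < q")
      case True
      have "per w (q - p)" using per_diff less.prems True by blast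
      then have "per w (gcd p (q - p))" using less.hyps[of p "q - p"] less.prems False True by auto
      moreover have "gcd p (q - p) = gcd p q"
        using gcd_diff1_nat[of p q] True by (simp add: gcd.commute)
      ultimately show ?thesis by simp
    next
      case f2: False
      then have qp: "q < p" using False by auto
      have "per w (p - q)" using per_diff less.prems qp by (metis add.commute)
      then have "per w (gcd q (p - q))" using less.hyps[of q "p - q"] less.prems False qp by auto
      moreover have "gcd q (p - q) = gcd p q"
        using gcd_diff1_nat[of q p] qp by (simp add: gcd.commute)
      ultimately show ?thesis by simp
    qed
  qed
qed

lemma per_lift: assumes "per w D" "e dvd D" "0 < e" "0 < D" "D \<le> length w" "per (take D w) e"
  shows "per w e"
proof -
  have e_le: "e \<le> D" using assms(2,4) by (simp add: dvd_imp_le)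
  have key: "w ! x = w ! (x mod e)" if "x < length w" for x
  proof -
    have "w ! x = w ! (x mod D)" using per_mod[OF assms(1) assms(4) that] .
    also have "\<dots> = take D w ! (x mod D)" using assms(4) by simp
    also have "\<dots> = take D w ! ((x mod D) mod e)"
      using per_mod[OF assms(6) assms(3), of "x mod D"] assms(4,5) by simp
    also have "(x mod D) mod e = x mod e" using assms(2) by (simp add: mod_mod_cancel)
    also have "take D w ! (x mod e) = w ! (x mod e)"
      using e_le assms(3) by (simp add: order_less_le_trans[OF mod_less_divisor])
    finally show ?thesis .
  qed
  show ?thesis unfolding per_def
  proof (intro allI impI)
    fix k assume "k + e < length w"
    then show "w ! k = w ! (k + e)" using key[of k] key[of "k+e"] by simp
  qed
qed

lemma rev_nth_eq: "rev u = u \<Longrightarrow> k < length u \<Longrightarrow> u ! k = u ! (length u - Suc k)"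
  by (metis rev_nth)

lemma border_per: assumes "rev P = P" "rev u = u" "take (length u) P = u"
  shows "per P (length P - length u)"
proof -
  have "length u = min (length u) (length P)" using arg_cong[OF assms(3), of length] by simp
  then have lu: "length u \<le> length P" by linarith
  obtain s where Ps: "P = u @ s" using assms(3) by (metis append_take_drop_id)
  have "P = rev P" using assms(1) by simp
  also have "\<dots> = rev s @ u" using Ps assms(2) by simp
  finally have "P = rev s @ u" .
  then have Pt: "P = rev s @ u" .
  have ls: "length s = length P - length u" using Ps by simp
  show ?thesis unfolding per_def
  proof (intro allI impI)
    fix k assume k: "k + (length P - length u) < length P"
    then have ku: "k < length u" using lu by linarith
    have "P ! (k + (length P - length u)) = u ! k"
      using Pt ls by (metis add.commute length_rev nth_append_length_plus)
    moreover have "P ! k = u ! k" using Ps ku by (simp add: nth_append)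
    ultimately show "P ! k = P ! (k + (length P - length u))" by simp
  qed
qed

lemma border_pal: assumes "rev P = P" "per P e" "e \<le> length P"
  shows "rev (take (length P - e) P) = take (length P - e) P"
proof (rule nth_equalityI)
  show "length (rev (take (length P - e) P)) = length (take (length P - e) P)" by simp
next
  fix k assume k: "k < length (rev (take (length P - e) P))"
  then have k2: "k < length P - e" by simp
  have "rev (take (length P - e) P) ! k = P ! (length P - e - Suc k)"
    using k2 by (simp add: rev_nth)
  also have "\<dots> = P ! (length P - Suc (length P - e - Suc k))"
    using rev_nth_eq[OF assms(1), of "length P - e - Suc k"] k2 by linarith
  also have "length P - Suc (length P - e - Suc k) = k + e" using k2 by simp
  also have "P ! (k + e) = P ! k" using assms(2) k2 unfolding per_def by simp
  finally show "rev (take (length P - e) P) ! k = take (length P - e) P ! k" using k2 by simp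
qed




lemma pal_le1: "n \<le> 1 \<Longrightarrow> pal psi n = []"
  by (subst pal.simps) simp

lemma pal_Suc_Inl: "1 \<le> n \<Longrightarrow> psi n = Inl a \<Longrightarrow> pal psi (Suc n) = pal psi n @ a # pal psi n"
  by (subst pal.simps) simp

lemma pal_Suc_Inr: "1 \<le> n \<Longrightarrow> psi n = Inr m \<Longrightarrow> m < Suc n \<Longrightarrow>
    pal psi (Suc n) = pal psi n @ drop (length (pal psi m)) (pal psi n)"
  by (subst pal.simps) simp

locale adm =
  fixes psi :: "nat \<Rightarrow> 'a + nat"
  assumes adm: "admissible psi"
begin

abbreviation P where "P \<equiv> pal psi"
abbreviation L where "L n \<equiv> length (pal psi n)"
definition d where "d j = L (Suc j) - L j"

lemma psi_cases: "1 \<le> n \<Longrightarrow> (\<exists>a. psi n = Inl a) \<or> (\<exists>m. psi n = Inr m \<and> 1 \<le> m \<and> m \<le> n - 1)"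
  using adm unfolding admissible_def by blast

lemma psi_Inr: "1 \<le> n \<Longrightarrow> psi n = Inr m \<Longrightarrow> 1 \<le> m \<and> m \<le> n - 1"
  using psi_cases by fastforce

lemma psi1: "\<exists>a. psi 1 = Inl a"
  using psi_cases[of 1] by auto

lemma pal_step: "\<exists>s. P (Suc n) = P n @ s"
proof (cases "1 \<le> n")
  case True
  show ?thesis
  proof (cases "psi n")
    case (Inl a) then show ?thesis using pal_Suc_Inl[of n psi a, OF True Inl] by (intro exI[of _ "a # P n"]) simp
  next
    case (Inr m)
    then have "m < Suc n" using psi_Inr[OF True] by auto
    then show ?thesis using pal_Suc_Inr[of n psi m, OF True Inr] by (intro exI[of _ "drop (L m) (P n)"]) simp
  qed
next
  case False
  then have "P n = []" "P (Suc n) = []" using pal_le1[of n psi] pal_le1[of "Suc n" psi] by auto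
  then show ?thesis by simp
qed

lemma pal_prefix_ex: "m \<le> n \<Longrightarrow> \<exists>s. P n = P m @ s"
proof (induction n rule: dec_induct)
  case base then show ?case by simp
next
  case (step n)
  then show ?case using pal_step[of n] by (metis append.assoc)
qed

lemma pal_prefix: "m \<le> n \<Longrightarrow> take (L m) (P n) = P m"
  using pal_prefix_ex by (metis append_eq_conv_conj)

lemma L_mono: "m \<le> n \<Longrightarrow> L m \<le> L n"
  using pal_prefix_ex by fastforce

lemma L_strict: "1 \<le> k \<Longrightarrow> k < n \<Longrightarrow> L k < L n"
proof (induction n arbitrary: k)
  case 0 then show ?case by simp
next
  case (Suc n)
  have step: "L n < L (Suc n)" if "1 \<le> n"
  proof (cases "psi n")
    case (Inl a) then show ?thesis using pal_Suc_Inl[of _ psi, OF that Inl] by simp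
  next
    case (Inr m)
    then have m: "1 \<le> m" "m < n" using psi_Inr[OF that] that by auto
    then have "L m < L n" using Suc.IH by blast
    then show ?thesis using pal_Suc_Inr[of _ psi, OF that Inr] m by simp
  qed
  show ?case
  proof (cases "k < n")
    case True
    then show ?thesis using Suc.IH[OF Suc.prems(1) True] L_mono[of n "Suc n"] by simp
  next
    case False
    then have "k = n" using Suc.prems by simp
    then show ?thesis using step Suc.prems by simp
  qed
qed

lemma L_inj: "1 \<le> a \<Longrightarrow> 1 \<le> b \<Longrightarrow> L a = L b \<Longrightarrow> a = b"
  using L_strict by (metis less_irrefl nat_neq_iff)

lemma L_le_iff: "1 \<le> a \<Longrightarrow> 1 \<le> b \<Longrightarrow> L a \<le> L b \<longleftrightarrow> a \<le> b"
  using L_strict L_mono by (metis leD le_less_linear)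

lemma L1: "L 1 = 0" using pal_le1[of 1 psi] by simp

lemma pal_rev: "rev (P n) = P n"
proof (induction n rule: less_induct)
  case (less n)
  show ?case
  proof (cases "2 \<le> n")
    case False then show ?thesis using pal_le1[of n psi] by simp
  next
    case True
    define k where "k = n - 1"
    have k: "n = Suc k" "1 \<le> k" using True unfolding k_def by auto
    have IHk: "rev (P k) = P k" using less.IH[of k] k by simp
    show ?thesis
    proof (cases "psi k")
      case (Inl a) then show ?thesis using pal_Suc_Inl[of _ psi, OF k(2) Inl] IHk k by simp
    next
      case (Inr m)
      then have m: "m \<le> k" "m < Suc k" using psi_Inr[OF k(2)] by auto
      have IHm: "rev (P m) = P m" using less.IH[of m] k m by simp
      define b where "b = drop (L m) (P k)"
      have Pn: "P k = P m @ b" using pal_prefix[OF m(1)] append_take_drop_id[of "L m" "P k"] unfolding b_def by simp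
      have "rev (P k) = rev b @ rev (P m)" using Pn by (simp only: rev_append)
      then have Pn2: "P k = rev b @ P m" using IHk IHm by simp
      have "P n = P k @ b" using pal_Suc_Inr[of _ psi, OF k(2) Inr m(2)] k b_def by simp
      then have "rev (P n) = rev b @ rev (P k)" by (simp only: rev_append)
      also have "\<dots> = rev b @ P m @ b" using IHk Pn by simp
      also have "\<dots> = P k @ b" using Pn2 by simp
      finally show ?thesis using \<open>P n = P k @ b\<close> by simp
    qed
  qed
qed

lemma L_Inl: assumes "1 \<le> n" "psi n = Inl a"
  shows "L (Suc n) = 2 * L n + 1" "d n = L n + 1" "P (Suc n) ! L n = a"
  using pal_Suc_Inl[of _ psi, OF assms] by (simp_all add: d_def nth_append)

lemma L_Inr: assumes "1 \<le> n" "psi n = Inr m"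
  shows "L (Suc n) = 2 * L n - L m" "d n = L n - L m" "L m < L n" "1 \<le> m" "m < n"
proof -
  have m: "1 \<le> m" "m < n" using psi_Inr[OF assms] assms(1) by auto
  then show "L m < L n" "1 \<le> m" "m < n" using L_strict by auto
  then show "L (Suc n) = 2 * L n - L m" "d n = L n - L m"
    using pal_Suc_Inr[of _ psi, OF assms] m by (simp_all add: d_def)
qed

lemma L_Suc: "L (Suc n) = L n + d n"
  using L_mono[of n "Suc n"] by (simp add: d_def)

lemma per_step: "per (P (Suc n)) (d n)"
  using border_per[OF pal_rev pal_rev pal_prefix[of n "Suc n"]] by (simp add: d_def)

lemma d_pos: "1 \<le> n \<Longrightarrow> 0 < d n"
  using L_strict[of n "Suc n"] by (simp add: d_def)

lemma L_unbounded: "n \<le> L (Suc n)"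
proof (induction n)
  case 0 then show ?case by simp
next
  case (Suc n)
  then show ?case using L_strict[of "Suc n" "Suc (Suc n)"] by simp
qed

lemma wpsi_nth: assumes "k < L n" shows "wpsi psi k = P n ! k"
proof -
  define N where "N = (LEAST n. k < L n)"
  have kN: "k < L N" unfolding N_def using assms by (rule LeastI)
  have Nn: "N \<le> n" unfolding N_def using assms by (rule Least_le)
  have "wpsi psi k = P N ! k" unfolding wpsi_def N_def by simp
  also have "\<dots> = take (L N) (P n) ! k" using pal_prefix[OF Nn] by simp
  also have "\<dots> = P n ! k" using kN by simp
  finally show ?thesis .
qed

lemma map_wpsi: "l \<le> L n \<Longrightarrow> map (wpsi psi) [0..<l] = take l (P n)"
  by (rule nth_equalityI) (auto simp: wpsi_nth)

lemma tset_ge1: "j \<in> tset psi \<Longrightarrow> 1 \<le> j"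
  unfolding tset_def by simp

lemma one_tset: "1 \<in> tset psi"
  using psi1 unfolding tset_def by auto

lemma not_tset: assumes "1 \<le> j" "j \<notin> tset psi" shows "psi j = Inr (j - 1)" "2 \<le> j"
proof -
  obtain m where m: "psi j = Inr m" "1 \<le> m" "m \<le> j - 1"
    using psi_cases[OF assms(1)] assms(2) unfolding tset_def using assms(1) by blast
  then have "\<not> m \<le> j - 2" using assms unfolding tset_def by auto
  then show "psi j = Inr (j - 1)" "2 \<le> j" using m by auto
qed

lemma d_not_tset: assumes "1 \<le> j" "j \<notin> tset psi" shows "d j = d (j - 1)"
proof -
  have j: "psi j = Inr (j - 1)" "2 \<le> j" using not_tset[OF assms] by auto
  have "d j = L j - L (j - 1)" using L_Inr(2)[OF assms(1) j(1)] .
  also have "\<dots> = d (j - 1)" using j(2) by (simp add: d_def)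
  finally show ?thesis .
qed

lemma tset_Inr: "j \<in> tset psi \<Longrightarrow> psi j = Inr m \<Longrightarrow> 1 \<le> m \<and> m \<le> j - 2"
  unfolding tset_def by auto

lemma AP: assumes "1 \<le> p" "\<forall>j. p < j \<and> j < i \<longrightarrow> j \<notin> tset psi" "p \<le> j" "j \<le> i"
  shows "L j = L p + (j - p) * d p \<and> (j < i \<longrightarrow> d j = d p)"
  using assms(3,4)
proof (induction j rule: dec_induct)
  case base then show ?case by simp
next
  case (step j)
  have j: "j < i" using step by simp
  have dj: "d j = d p" using step j by simp
  have Lj: "L j = L p + (j - p) * d p" using step j by simp
  have pj: "p \<le> j" using step by simp
  have "(Suc j - p) * d p = (j - p) * d p + d p" using pj by (simp add: Suc_diff_le)
  then have "L (Suc j) = L p + (Suc j - p) * d p"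
    using L_Suc[of j] Lj dj by simp
  moreover have "d (Suc j) = d p" if "Suc j < i"
    using d_not_tset[of "Suc j"] assms(2) step(1) that dj assms(1) by auto
  ultimately show ?case by blast
qed

end



context adm begin

definition MP where "MP j \<longleftrightarrow> (\<forall>e. 0 < e \<longrightarrow> e < d j \<longrightarrow> \<not> per (P (Suc j)) e)"

lemma per_P_of_Suc: "per (P (Suc n)) e \<Longrightarrow> per (P n) e"
  using per_take[of "P (Suc n)" e "L n"] pal_prefix[of n "Suc n"] by simp

lemma lemX:
  assumes IH: "\<And>j. 1 \<le> j \<Longrightarrow> j < i \<Longrightarrow> MP j"
    and pi: "p < i" and pt: "p \<in> tset psi" and pm: "psi p = Inr m0" and dle: "d p \<le> L m0 + 1"
  shows False
proof -
  have m0: "1 \<le> m0" "m0 \<le> p - 2" using tset_Inr[OF pt pm] by auto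
  have p1: "1 \<le> p" using tset_ge1[OF pt] .
  have dD: "d p = L p - L m0" "L m0 < L p" using L_Inr[OF p1 pm] by auto
  obtain k where pk: "p = Suc k" "m0 < k" using m0 p1
    by (metis Suc_diff_1 Suc_le_eq diff_Suc_eq_diff_pred le_add_diff_inverse2 less_le_trans
        nat_less_le numeral_2_eq_2 zero_less_diff add_lessD1 Suc_1 diff_diff_left le_neq_implies_less
        not_less_eq_eq)
  have k1: "1 \<le> k" using pk m0 by simp
  have Lp: "L p = L k + d k" using L_Suc[of k] pk by simp
  have Lmk: "L m0 < L k" using L_strict[OF m0(1) pk(2)] .
  have epos: "0 < d k" using d_pos[OF k1] .
  have eD: "d k < d p" using dD Lp Lmk by simp
  have per_e: "per (P p) (d k)" using per_step[of k] pk by simp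
  have per_D: "per (P p) (d p)" using per_P_of_Suc[OF per_step[of p]] .
  have sum: "d k + d p \<le> L p" using dD dle eD by linarith
  define g where "g = gcd (d k) (d p)"
  have per_g: "per (P p) g" unfolding g_def using fw[OF per_e per_D sum] .
  have gpos: "0 < g" unfolding g_def using epos by simp
  have gle: "g \<le> d k" unfolding g_def using epos by (simp add: gcd_le1_nat)
  have gdvd: "g dvd d p" unfolding g_def by simp
  have Dpos: "0 < d p" using d_pos[OF p1] .
  have DleLp: "d p \<le> L p" using dD by simp
  have tk: "take (d p) (P (Suc p)) = take (d p) (P p)"
  proof -
    have "take (d p) (P p) = take (d p) (take (L p) (P (Suc p)))" using pal_prefix[of p "Suc p"] by simp
    also have "\<dots> = take (d p) (P (Suc p))" using DleLp by (simp add: min_def)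
    finally show ?thesis by simp
  qed
  have "per (P (Suc p)) g"
    apply (rule per_lift[OF per_step[of p] gdvd gpos Dpos])
    using L_Suc[of p] apply simp
    using tk per_take[OF per_g] by simp
  moreover have "MP p" using IH p1 pi by blast
  ultimately show False unfolding MP_def using gpos gle eD by auto
qed

end



context adm begin

lemma prev_tset:
  assumes "1 < i"
  obtains p where "p \<in> tset psi" "p < i" "\<forall>j. p < j \<and> j < i \<longrightarrow> j \<notin> tset psi"
proof -
  define S where "S = {j \<in> tset psi. j < i}"
  have fin: "finite S" unfolding S_def by auto
  have ne: "1 \<in> S" unfolding S_def using one_tset assms by auto
  define p where "p = Max S"
  have "p \<in> S" unfolding p_def using fin ne Max_in by blast
  moreover have "\<forall>j. p < j \<and> j < i \<longrightarrow> j \<notin> tset psi"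
    using Max_ge[OF fin] unfolding p_def S_def by fastforce
  ultimately show ?thesis using that unfolding S_def by blast
qed

lemma hard:
  assumes red: "reduced psi"
  shows "1 \<le> i \<Longrightarrow> MP i"
proof (induction i rule: less_induct)
  case (less i)
  have IH: "\<And>j. 1 \<le> j \<Longrightarrow> j < i \<Longrightarrow> MP j" using less.IH by blast
  show ?case unfolding MP_def
  proof (intro allI impI notI)
    fix r assume r0: "0 < r" and rq: "r < d i" and perr: "per (P (Suc i)) r"
    define q where "q = d i"
    have perq: "per (P (Suc i)) q" unfolding q_def by (rule per_step)
    have qle: "q \<le> L i + 1"
    proof (cases "psi i")
      case (Inl a) then show ?thesis using L_Inl[OF less.prems] q_def by simp
    next
      case (Inr m) then show ?thesis using L_Inr[OF less.prems] q_def by simp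
    qed
    have LSi: "L (Suc i) = L i + q" unfolding q_def by (rule L_Suc)
    have sum: "r + q \<le> L (Suc i)" using LSi qle rq q_def by linarith
    define g where "g = gcd r q"
    have perg: "per (P (Suc i)) g" unfolding g_def by (rule fw[OF perr perq sum])
    have gpos: "0 < g" unfolding g_def using r0 by simp
    have gler: "g \<le> r" unfolding g_def using r0 by (simp add: gcd_le1_nat)
    have gdvd: "g dvd q" unfolding g_def by simp
    have g2: "2 * g \<le> q"
    proof -
      obtain c where c: "q = g * c" using gdvd by blast
      have "q \<noteq> 0" using rq q_def by simp
      then have "c \<noteq> 0" using c by auto
      moreover have "c \<noteq> 1" using c gler rq q_def by auto
      ultimately have "2 \<le> c" by simp
      then have "g * 2 \<le> g * c" by (rule mult_le_mono2)
      then show ?thesis using c by linarith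
    qed
    have pergi: "per (P i) g" using per_P_of_Suc[OF perg] .
    have i1: "i \<noteq> 1"
    proof
      assume "i = 1"
      then obtain a where pa: "psi i = Inl a" using psi1 by blast
      have "q = 1" using L_Inl(2)[OF less.prems pa] \<open>i = 1\<close> L1 q_def by simp
      then show False using rq r0 q_def by simp
    qed
    define k where "k = i - 1"
    have ik: "i = Suc k" and k1: "1 \<le> k" using less.prems i1 unfolding k_def by auto
    have MPk: "MP k" using IH k1 ik by simp
    define D where "D = d k"
    have perD: "per (P i) D" unfolding D_def using per_step[of k] ik by simp
    have Dpos: "0 < D" unfolding D_def using d_pos[OF k1] .
    have Dg: "D \<le> g"
    proof (rule ccontr)
      assume "\<not> D \<le> g"
      then have lt: "g < d k" unfolding D_def by simp
      have "per (P (Suc k)) g" using pergi ik by simp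
      then show False using MPk lt gpos unfolding MP_def by blast
    qed
    have it: "i \<in> tset psi"
    proof (rule ccontr)
      assume "i \<notin> tset psi"
      then have "d i = d k" using d_not_tset[OF less.prems] ik by simp
      then show False using Dg gler rq D_def by simp
    qed
    have "1 < i" using less.prems i1 by simp
    then obtain p where pt: "p \<in> tset psi" and pi: "p < i" and btw: "\<forall>j. p < j \<and> j < i \<longrightarrow> j \<notin> tset psi"
      by (rule prev_tset)
    have p1: "1 \<le> p" using tset_ge1[OF pt] .
    have Li: "L i = L p + (i - p) * d p" using AP[OF p1 btw, of i] pi by simp
    have Dp: "D = d p" using AP[OF p1 btw, of k] pi ik D_def by simp
    have Ddvdg: "D dvd g"
    proof (cases "D + g \<le> L i")
      case True
      have pg: "per (P i) (gcd D g)" using fw[OF perD pergi True] .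
      have "gcd D g \<le> D" using Dpos by (simp add: gcd_le1_nat)
      moreover have "0 < gcd D g" using Dpos by simp
      moreover have "\<not> gcd D g < D"
      proof
        assume lt: "gcd D g < D"
        have "per (P (Suc k)) (gcd D g)" using pg ik by simp
        moreover have "0 < gcd D g" using Dpos by simp
        ultimately show False using MPk lt unfolding MP_def D_def by blast
      qed
      ultimately have "gcd D g = D" by simp
      then show ?thesis using gcd_dvd2[of D g] by simp
    next
      case False
      then have "D = g" using Dg g2 qle by linarith
      then show ?thesis by simp
    qed
    have Dq: "D dvd q" using dvd_trans[OF Ddvdg gdvd] .
    have rd: "psi i \<noteq> psi p \<and> ((\<exists>a. psi i = Inl a) \<or> (\<exists>m. psi i = Inr m \<and> m < p))"
      using red pt it pi btw unfolding reduced_def by blast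
    show False
    proof (cases "psi i")
      case (Inl a)
      have qi: "q = L i + 1" using L_Inl(2)[OF less.prems Inl] q_def by simp
      have "D dvd L p + 1 + (i - p) * D" using Dq qi Li Dp by (simp add: algebra_simps)
      then have DLp: "D dvd L p + 1" by (simp only: dvd_add_times_triv_right_iff)
      show False
      proof (cases "psi p")
        case (Inl b)
        have ab: "a \<noteq> b" using rd Inl \<open>psi i = Inl a\<close> by auto
        have Dp1: "D = L p + 1" using L_Inl(2)[OF p1 Inl] Dp by simp
        have b1: "P (Suc p) ! L p = b" using L_Inl(3)[OF p1 Inl] .
        have LpS: "L p < L (Suc p)" using L_Inl(1)[OF p1 Inl] by simp
        have Spi: "Suc p \<le> i" using pi by simp
        have b2: "P i ! L p = b"
        proof -
          have "take (L (Suc p)) (P i) ! L p = P i ! L p" using LpS by simp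
          then show ?thesis using b1 pal_prefix[OF Spi] by simp
        qed
        have gLi: "g \<le> L i" using g2 qi gpos by linarith
        have "P (Suc i) ! (L i - g) = P (Suc i) ! (L i - g + g)"
          using perg gLi LSi qi unfolding per_def by simp
        also have "\<dots> = a" using gLi L_Inl(3)[OF less.prems \<open>psi i = Inl a\<close>] by simp
        finally have a1: "P (Suc i) ! (L i - g) = a" .
        have "P (Suc i) ! (L i - g) = P i ! (L i - g)"
        proof -
          have "L i - g < L i" using gpos gLi by linarith
          then have "take (L i) (P (Suc i)) ! (L i - g) = P (Suc i) ! (L i - g)" by simp
          then show ?thesis using pal_prefix[of i "Suc i"] by simp
        qed
        then have a2: "P i ! (L i - g) = a" using a1 by simp
        obtain c where gc0: "g = D * c" using Ddvdg by (rule dvdE)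
        have gc: "g = c * D" using gc0 by (simp add: mult.commute)
        have c_le: "c \<le> i - p"
        proof (rule ccontr)
          assume "\<not> c \<le> i - p"
          then have "i - p + 1 \<le> c" by simp
          then have "(i - p + 1) * D \<le> c * D" by (rule mult_le_mono1)
          then show False using gc gLi Li Dp Dp1 by (simp add: algebra_simps)
        qed
        have eq: "L i - g = L p + (i - p - c) * D"
        proof -
          have e1: "i - p = (i - p - c) + c" using c_le by simp
          have "(i - p) * D = ((i - p - c) + c) * D" using e1 by (rule arg_cong[where f="\<lambda>x. x * D"])
          also have "\<dots> = (i - p - c) * D + c * D" by (rule add_mult_distrib)
          finally have "(i - p) * D = (i - p - c) * D + c * D" .
          then show ?thesis using Li Dp gc by simp
        qed
        have "P i ! (L i - g) = P i ! L p"
          apply (rule per_cong[OF perD])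
          using gpos gLi apply linarith
          using LpS L_mono[OF Spi] apply linarith
          using eq by simp
        then show False using a2 b2 ab by simp
      next
        case (Inr m0)
        have "D = L p - L m0" "L m0 < L p" using L_Inr[OF p1 Inr] Dp by auto
        then have eq: "L p + 1 = (L m0 + 1) + D" by simp
        have "D dvd (L m0 + 1) + D" using DLp unfolding eq .
        then have "D dvd L m0 + 1" by (simp only: dvd_add_triv_right_iff)
        then have "d p \<le> L m0 + 1" using Dp by (simp add: dvd_imp_le)
        then show False using lemX[OF IH pi pt Inr] by simp
      qed
    next
      case (Inr m)
      have mp: "m < p" "psi p \<noteq> Inr m" using rd Inr by auto
      have m1: "1 \<le> m" using L_Inr(4)[OF less.prems Inr] .
      have qi: "q = L i - L m" using L_Inr(2)[OF less.prems Inr] q_def by simp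
      have Lmp: "L m < L p" using L_strict[OF m1 mp(1)] .
      have "q = (L p - L m) + (i - p) * D" using qi Li Dp Lmp by simp
      then have DLp: "D dvd L p - L m" using Dq by (simp add: dvd_add_left_iff)
      show False
      proof (cases "psi p")
        case (Inl b)
        have "D = L p + 1" using L_Inl(2)[OF p1 Inl] Dp by simp
        moreover have "D \<le> L p - L m" using dvd_imp_le[OF DLp] Lmp by simp
        ultimately show False by linarith
      next
        case (Inr m0)
        have mm0: "m0 \<noteq> m" using mp Inr by auto
        have DD: "D = L p - L m0" "L m0 < L p" "1 \<le> m0" using L_Inr[OF p1 Inr] Dp by auto
        obtain c where c: "L p - L m = D * c" using DLp by blast
        have "L p - L m \<noteq> 0" using Lmp by simp
        then have "c \<noteq> 0" using c by auto
        moreover have "c \<noteq> 1"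
        proof
          assume "c = 1"
          then have "L m = L m0" using c DD Lmp by simp
          then show False using L_inj[OF m1 DD(3)] mm0 by simp
        qed
        ultimately have "2 \<le> c" by simp
        then have "D * 2 \<le> D * c" by simp
        then have "d p \<le> L m0 + 1" using c DD Dp by linarith
        then show False using lemX[OF IH pi pt Inr] by simp
      qed
    qed
  qed
qed

end



context adm begin

lemma easy:
  assumes nred: "\<not> reduced psi"
  shows "\<exists>i\<ge>1. \<not> MP i"
proof -
  obtain p i where pt: "p \<in> tset psi" and it: "i \<in> tset psi" and pi: "p < i"
    and btw: "\<forall>j. p < j \<and> j < i \<longrightarrow> j \<notin> tset psi"
    and viol: "\<not> (psi i \<noteq> psi p \<and> ((\<exists>a. psi i = Inl a) \<or> (\<exists>m. psi i = Inr m \<and> m < p)))"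
    using nred unfolding reduced_def by blast
  have p1: "1 \<le> p" using tset_ge1[OF pt] .
  have i1: "1 \<le> i" using tset_ge1[OF it] .
  define D where "D = d p"
  have Dpos: "0 < D" unfolding D_def using d_pos[OF p1] .
  have Li: "L i = L p + (i - p) * D" using AP[OF p1 btw, of i] pi D_def by simp
  define k where "k = i - 1"
  have ik: "i = Suc k" and pk: "p \<le> k" using pi unfolding k_def by auto
  have dk: "d k = D" using AP[OF p1 btw, of k] pk ik D_def by simp
  have perD: "per (P i) D" using per_step[of k] ik dk by simp
  have LSi: "L (Suc i) = L i + d i" by (rule L_Suc)
  have "per (P (Suc i)) D \<and> D < d i"
  proof (cases "psi i")
    case (Inl a)
    have pa: "psi p = Inl a" using viol Inl by auto
    have Dp1: "D = L p + 1" using L_Inl(2)[OF p1 pa] D_def by simp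
    have qi: "d i = L i + 1" using L_Inl(2)[OF i1 Inl] .
    have qD: "d i = (i - p + 1) * D" using qi Li Dp1 by (simp add: algebra_simps)
    have a1: "P (Suc p) ! L p = a" using L_Inl(3)[OF p1 pa] .
    have LpS: "L p < L (Suc p)" using L_Inl(1)[OF p1 pa] by simp
    have Spi: "Suc p \<le> i" using pi by simp
    have "take (L (Suc p)) (P i) ! L p = P i ! L p" using LpS by simp
    then have a2: "P i ! L p = a" using a1 pal_prefix[OF Spi] by simp
    have LpLi: "L p < L i" using LpS L_mono[OF Spi] by simp
    have tk: "take (d i) (P (Suc i)) = P i @ [a]"
      using pal_Suc_Inl[of _ psi, OF i1 Inl] qi by simp
    have perA: "per (P i @ [a]) D" unfolding per_def
    proof (intro allI impI)
      fix x assume x: "x + D < length (P i @ [a])"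
      show "(P i @ [a]) ! x = (P i @ [a]) ! (x + D)"
      proof (cases "x + D < L i")
        case True then show ?thesis using perD unfolding per_def by (simp add: nth_append)
      next
        case False
        then have xe: "x + D = L i" using x by simp
        have xeq: "x = L p + (i - p - 1) * D"
        proof -
          have e1: "i - p = Suc (i - p - 1)" using pi by simp
          have "(i - p) * D = Suc (i - p - 1) * D" using e1 by (rule arg_cong[where f="\<lambda>x. x * D"])
          also have "\<dots> = D + (i - p - 1) * D" by (rule mult_Suc)
          finally have "(i - p) * D = (i - p - 1) * D + D" by simp
          then show ?thesis using xe Li by simp
        qed
        have "P i ! x = P i ! L p"
          apply (rule per_cong[OF perD])
          using xe Dpos apply linarith
          using LpLi apply simp
          using xeq by simp
        then show ?thesis using xe a2 Dpos by (simp add: nth_append)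
      qed
    qed
    have "per (P (Suc i)) D"
      apply (rule per_lift[OF per_step[of i], of D])
      using qD apply simp
      using Dpos apply simp
      using qi apply simp
      using LSi apply simp
      using tk perA by simp
    moreover have "D < d i" using qD pi Dpos by simp
    ultimately show ?thesis by blast
  next
    case (Inr m)
    have mt: "1 \<le> m" "m \<le> i - 2" using tset_Inr[OF it Inr] by auto
    have qi: "d i = L i - L m" "L m < L i" using L_Inr[OF i1 Inr] by auto
    have "\<exists>c. d i = c * D \<and> 2 \<le> c"
    proof (cases "psi p = Inr m")
      case True
      have DD: "D = L p - L m" "L m < L p" using L_Inr[OF p1 True] D_def by auto
      have "d i = D + (i - p) * D" using qi Li DD by linarith
      moreover have "(i - p + 1) * D = (i - p) * D + D" by simp
      ultimately have "d i = (i - p + 1) * D" by linarith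
      then show ?thesis using pi by (intro exI[of _ "i - p + 1"]) simp
    next
      case False
      then have mp: "p \<le> m" using viol Inr by auto
      have mi: "m < i" using mt i1 by linarith
      have Lm: "L m = L p + (m - p) * D" using AP[OF p1 btw, of m] mp mi D_def by simp
      have e1: "i - p = (i - m) + (m - p)" using mp mi by simp
      have "(i - p) * D = ((i - m) + (m - p)) * D" using e1 by (rule arg_cong[where f="\<lambda>x. x * D"])
      also have "\<dots> = (i - m) * D + (m - p) * D" by (rule add_mult_distrib)
      finally have "(i - p) * D = (i - m) * D + (m - p) * D" .
      then have "d i = (i - m) * D" using qi Li Lm by simp
      then show ?thesis using mt mi by (intro exI[of _ "i - m"]) simp
    qed
    then obtain c where c: "d i = c * D" "2 \<le> c" by blast
    have tk: "take (d i) (P (Suc i)) = take (d i) (P i)"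
    proof -
      have "take (d i) (P i) = take (d i) (take (L i) (P (Suc i)))" using pal_prefix[of i "Suc i"] by simp
      also have "\<dots> = take (d i) (P (Suc i))" using qi by (simp add: min_def)
      finally show ?thesis by simp
    qed
    have "per (P (Suc i)) D"
      apply (rule per_lift[OF per_step[of i], of D])
      using c apply simp
      using Dpos apply simp
      using c Dpos apply simp
      using LSi apply simp
      using tk per_take[OF perD] by simp
    moreover have "D < d i"
    proof -
      have "2 * D \<le> c * D" using c(2) by (rule mult_le_mono1)
      then show ?thesis using c(1) Dpos by linarith
    qed
    ultimately show ?thesis by blast
  qed
  then have "\<not> MP i" unfolding MP_def using Dpos by blast
  then show ?thesis using i1 by blast
qed

lemma sets_iff:
  "(\<forall>i\<ge>1. MP i) \<longleftrightarrow>
   {u. is_prefix_of_inf u (wpsi psi) \<and> rev u = u} = {pal psi i | i. i \<ge> 1}"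
proof -
  have sup: "{pal psi i | i. i \<ge> 1} \<subseteq> {u. is_prefix_of_inf u (wpsi psi) \<and> rev u = u}"
  proof
    fix u assume "u \<in> {pal psi i | i. i \<ge> 1}"
    then obtain i where ui: "u = P i" by blast
    have "map (wpsi psi) [0..<L i] = take (L i) (P i)" using map_wpsi[of "L i" i] by simp
    then show "u \<in> {u. is_prefix_of_inf u (wpsi psi) \<and> rev u = u}"
      unfolding is_prefix_of_inf_def using ui pal_rev[of i] by simp
  qed
  show ?thesis
  proof
    assume allMP: "\<forall>i\<ge>1. MP i"
    have "{u. is_prefix_of_inf u (wpsi psi) \<and> rev u = u} \<subseteq> {pal psi i | i. i \<ge> 1}"
    proof
      fix u assume "u \<in> {u. is_prefix_of_inf u (wpsi psi) \<and> rev u = u}"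
      then have up: "u = map (wpsi psi) [0..<length u]" and ur: "rev u = u"
        unfolding is_prefix_of_inf_def by auto
      define l where "l = length u"
      have ex: "l < L (Suc (Suc l))" using L_unbounded[of "Suc l"] by simp
      define N where "N = (LEAST n. l < L n)"
      have lN: "l < L N" unfolding N_def using ex by (rule LeastI)
      have N2: "2 \<le> N"
      proof (rule ccontr)
        assume "\<not> 2 \<le> N" then have "N \<le> 1" by simp
        then show False using lN pal_le1[of N psi] by simp
      qed
      define i where "i = N - 1"
      have Ni: "N = Suc i" and i1: "1 \<le> i" using N2 unfolding i_def by auto
      have Lil: "L i \<le> l" using not_less_Least[of i "\<lambda>n. l < L n"] Ni unfolding N_def by fastforce
      have uN: "u = take l (P N)" using up map_wpsi[of l N] lN unfolding l_def by simp
      show "u \<in> {pal psi i | i. i \<ge> 1}"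
      proof (cases "L i = l")
        case True
        then have "u = P i" using uN pal_prefix[of i N] Ni by simp
        then show ?thesis using i1 by blast
      next
        case False
        then have Lil2: "L i < l" using Lil by simp
        have "take (length u) (P N) = u" using uN lN unfolding l_def by simp
        then have "per (P N) (L N - l)" using border_per[OF pal_rev ur] unfolding l_def by simp
        moreover have "0 < L N - l" "L N - l < d i" using lN Lil2 Ni unfolding d_def by auto
        ultimately show ?thesis using allMP i1 Ni unfolding MP_def by auto
      qed
    qed
    then show "{u. is_prefix_of_inf u (wpsi psi) \<and> rev u = u} = {pal psi i | i. i \<ge> 1}"
      using sup by blast
  next
    assume eq: "{u. is_prefix_of_inf u (wpsi psi) \<and> rev u = u} = {pal psi i | i. i \<ge> 1}"
    show "\<forall>i\<ge>1. MP i"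
    proof (intro allI impI)
      fix i :: nat assume i1: "1 \<le> i"
      show "MP i" unfolding MP_def
      proof (intro allI impI notI)
        fix e assume e0: "0 < e" and ed: "e < d i" and pe: "per (P (Suc i)) e"
        have LS: "L (Suc i) = L i + d i" by (rule L_Suc)
        define u where "u = take (L (Suc i) - e) (P (Suc i))"
        have ur: "rev u = u" unfolding u_def using border_pal[OF pal_rev pe] ed LS by simp
        have lu: "length u = L (Suc i) - e" unfolding u_def by simp
        have "is_prefix_of_inf u (wpsi psi)" unfolding is_prefix_of_inf_def lu
          using map_wpsi[of "L (Suc i) - e" "Suc i"] u_def by simp
        then have "u \<in> {pal psi i | i. i \<ge> 1}" using eq ur by blast
        then obtain j where j: "u = P j" "1 \<le> j" by blast
        have "L i < L j" "L j < L (Suc i)" using j lu ed LS e0 by auto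
        then show False using L_le_iff[OF j(2) i1] L_le_iff[of "Suc i" j] j(2) by auto
      qed
    qed
  qed
qed

end

theorem theorem4p12:
  fixes psi :: "nat \<Rightarrow> 'a + nat"
  assumes "admissible psi"
  shows "reduced psi \<longleftrightarrow>
           {u. is_prefix_of_inf u (wpsi psi) \<and> rev u = u} = {pal psi i | i. i \<ge> 1}"
proof -
  interpret adm psi using assms by unfold_locales
  have "reduced psi \<longleftrightarrow> (\<forall>i\<ge>1. MP i)" using hard easy by blast
  then show ?thesis using sets_iff by simp
qed


end
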